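(* Let $\{A_1,\ldots,A_q\}$ be a collection of sets, each of size at least one, such that all but at most one of them have size exactly $2$, and each element appears in at most two of the sets. Then $\{A_1,\ldots,A_q\}$ has a system of distinct representatives, i.e., there exist pairwise distinct elements $a_1,\ldots,a_q$ with $a_i\in A_i$ for all $i\in[q]$. *)

theory Defs
  imports Main
begin

end

theory Submission
  imports Defs
begin

lemma sdr_gen:
  fixes A :: "nat \<Rightarrow> 'a set"
  shows "finite I \<Longrightarrow> (\<forall>i\<in>I. A i \<noteq> {}) \<Longrightarrow> (\<forall>i\<in>I. i \<noteq> j \<longrightarrow> card (A i) = 2)
    \<Longrightarrow> (\<forall>x. card {i\<in>I. x \<in> A i} \<le> 2)
    \<Longrightarrow> \<exists>a. inj_on a I \<and> (\<forall>i\<in>I. a i \<in> A i)"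
proof (induction "card I" arbitrary: I A j)
  case 0
  then show ?case by auto
next
  case (Suc n)
  then have "I \<noteq> {}" by auto
  define k where "k = (if j \<in> I then j else (SOME i. i \<in> I))"
  have kI: "k \<in> I" using \<open>I \<noteq> {}\<close> by (auto simp: k_def intro: someI_ex)
  have notj: "\<And>i. i \<in> I \<Longrightarrow> i \<noteq> k \<Longrightarrow> i \<noteq> j" by (auto simp: k_def)
  obtain x where xk: "x \<in> A k" using Suc.prems(2) kI by auto
  define I' where "I' = I - {k}"
  define A' where "A' = (\<lambda>i. A i - {x})"
  have cI': "n = card I'" using Suc.hyps(2) Suc.prems(1) kI by (simp add: I'_def)
  have fin: "finite I'" using Suc.prems(1) by (simp add: I'_def)
  have c2: "\<And>i. i \<in> I' \<Longrightarrow> card (A i) = 2"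
    using Suc.prems(3) notj by (auto simp: I'_def)
  have uniq: "\<And>i i'. i \<in> I' \<Longrightarrow> i' \<in> I' \<Longrightarrow> x \<in> A i \<Longrightarrow> x \<in> A i' \<Longrightarrow> i = i'"
  proof (rule ccontr)
    fix i i' assume h: "i \<in> I'" "i' \<in> I'" "x \<in> A i" "x \<in> A i'" "i \<noteq> i'"
    have "{k, i, i'} \<subseteq> {i\<in>I. x \<in> A i}" using h kI xk by (auto simp: I'_def)
    moreover have "card {k, i, i'} = 3" using h by (auto simp: I'_def)
    moreover have "finite {i\<in>I. x \<in> A i}" using Suc.prems(1) by simp
    ultimately have "3 \<le> card {i\<in>I. x \<in> A i}"
      by (metis card_mono)
    moreover have "card {i\<in>I. x \<in> A i} \<le> 2" using Suc.prems(4) by blast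
    ultimately show False by linarith
  qed
  have ne': "\<forall>i\<in>I'. A' i \<noteq> {}"
  proof
    fix i assume i: "i \<in> I'"
    show "A' i \<noteq> {}"
    proof (cases "x \<in> A i")
      case True
      have "card (A i - {x}) = 1" using c2[OF i] True by simp
      then have "A i - {x} \<noteq> {}" by (metis card.empty zero_neq_one)
      then show ?thesis by (simp add: A'_def)
    next
      case False
      then show ?thesis using Suc.prems(2) i by (auto simp: A'_def I'_def)
    qed
  qed
  obtain j' where j': "\<forall>i\<in>I'. i \<noteq> j' \<longrightarrow> card (A' i) = 2"
  proof (cases "\<exists>i\<in>I'. x \<in> A i")
    case True
    then obtain i0 where i0: "i0 \<in> I'" "x \<in> A i0" by auto
    have "\<forall>i\<in>I'. i \<noteq> i0 \<longrightarrow> card (A' i) = 2"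
    proof (intro ballI impI)
      fix i assume i: "i \<in> I'" "i \<noteq> i0"
      then have "x \<notin> A i" using uniq[OF _ i0(1) _ i0(2)] by blast
      then show "card (A' i) = 2" using c2[OF i(1)] by (simp add: A'_def)
    qed
    then show ?thesis using that by blast
  next
    case False
    then have "\<forall>i\<in>I'. i \<noteq> k \<longrightarrow> card (A' i) = 2"
      using c2 by (auto simp: A'_def)
    then show ?thesis using that by blast
  qed
  have deg': "\<forall>y. card {i\<in>I'. y \<in> A' i} \<le> 2"
  proof
    fix y
    have "{i\<in>I'. y \<in> A' i} \<subseteq> {i\<in>I. y \<in> A i}" by (auto simp: I'_def A'_def)
    then have "card {i\<in>I'. y \<in> A' i} \<le> card {i\<in>I. y \<in> A i}"
      using Suc.prems(1) by (intro card_mono) auto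
    then show "card {i\<in>I'. y \<in> A' i} \<le> 2" using Suc.prems(4) le_trans by blast
  qed
  obtain a' where a': "inj_on a' I'" "\<forall>i\<in>I'. a' i \<in> A' i"
    using Suc.hyps(1)[OF cI' fin ne' j' deg'] by blast
  define a where "a = a'(k := x)"
  have "inj_on a I"
  proof -
    have "I = insert k I'" using kI by (auto simp: I'_def)
    moreover have "inj_on a I'" using a'(1) by (auto simp: a_def I'_def inj_on_def)
    moreover have "a k \<notin> a ` I'" using a'(2) by (auto simp: a_def A'_def I'_def)
    moreover have "k \<notin> I'" by (simp add: I'_def)
    ultimately show ?thesis by simp
  qed
  moreover have "\<forall>i\<in>I. a i \<in> A i" using a'(2) xk by (auto simp: a_def A'_def I'_def)
  ultimately show ?case by blast
qed

theorem lemma42: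
  fixes A :: "nat \<Rightarrow> 'a set" and q :: nat
  assumes nonempty: "\<And>i. i < q \<Longrightarrow> A i \<noteq> {}"
    and almost_two: "\<exists>j. \<forall>i<q. i \<noteq> j \<longrightarrow> card (A i) = 2"
    and degree: "\<And>x. card {i. i < q \<and> x \<in> A i} \<le> 2"
  shows "\<exists>a. inj_on a {..<q} \<and> (\<forall>i<q. a i \<in> A i)"
proof -
  obtain j where j: "\<forall>i<q. i \<noteq> j \<longrightarrow> card (A i) = 2" using almost_two by blast
  have "\<exists>a. inj_on a {..<q} \<and> (\<forall>i\<in>{..<q}. a i \<in> A i)"
  proof (rule sdr_gen[where j = j])
    show "\<forall>x. card {i \<in> {..<q}. x \<in> A i} \<le> 2"
      using degree by (simp add: lessThan_def)
  qed (use nonempty j in auto)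
  then show ?thesis by auto
qed

end
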